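(* Let $n\ge2$, $m=3$, $r=1$, and $E_1\ge E_2\ge\dots\ge E_n>0$. Define $$U_i=\frac{i}{\frac{3}{E_1}+\sum_{k=2}^i\frac1{E_k}}\ (1\le i\le n),\qquad V_i=\frac{i-1}{\sum_{k=1}^i\frac1{E_k}}\ (2\le i\le n),$$ let $u$ be the least index in $\arg\max_{1\le i\le n}U_i$ and $v$ the least index in $\arg\max_{2\le i\le n}V_i$. If $V_v>U_u$, then $\mathbf{p}^*$ with $p^*_k=\frac{1/E_k}{\sum_{j=1}^v1/E_j}$ for $k\le v$ and $p^*_k=0$ for $k>v$ maximizes $f^{\mathrm{worst}}$ over $\mathcal{I}$. If $U_u\ge V_v$, then $\mathbf{p}^*$ with $p^*_1=\frac{3/E_1}{3/E_1+\sum_{j=2}^u1/E_j}$, $p^*_k=\frac{1/E_k}{3/E_1+\sum_{j=2}^u1/E_j}$ for $2\le k\le u$, and $p^*_k=0$ for $k>u$, maximizes $f^{\mathrm{worst}}$ over $\mathcal{I}$. In both cases the optimal value $\max_{\mathbf{p}\in\mathcal{I}}f^{\mathrm{worst}}(\mathbf{p})$ equals $\max\{U_u,V_v\}$.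
   Context: $\mathcal{I}=\{\mathbf{p}\in[0,1]^n:\sum_kp_k=1\}$; $\mathcal{J}_2=\{\mathbf{x}\in\{0,1,2\}^n:\sum_jx_j=2\}$; $f(\mathbf{p},\mathbf{x})=\sum_k\frac{E_kp_k}{1+x_k}$; $f^{\mathrm{worst}}(\mathbf{p})=\min_{\mathbf{x}\in\mathcal{J}_2}f(\mathbf{p},\mathbf{x})$. *)

theory Defs
  imports Complex_Main
begin

definition simplexI :: "nat \<Rightarrow> (nat \<Rightarrow> real) set" where
  "simplexI n = {p. (\<forall>k\<in>{1..n}. 0 \<le> p k \<and> p k \<le> 1) \<and> (\<Sum>k=1..n. p k) = 1}"

text \<open>J_2: x in {0,1,2}^n with sum 2 (extended by 0 outside {1..n} so the set is finite).\<close>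
definition J2 :: "nat \<Rightarrow> (nat \<Rightarrow> nat) set" where
  "J2 n = {x. (\<forall>j\<in>{1..n}. x j \<le> 2) \<and> (\<forall>j. j \<notin> {1..n} \<longrightarrow> x j = 0)
              \<and> (\<Sum>j=1..n. x j) = 2}"

definition fval :: "nat \<Rightarrow> (nat \<Rightarrow> real) \<Rightarrow> (nat \<Rightarrow> real) \<Rightarrow> (nat \<Rightarrow> nat) \<Rightarrow> real" where
  "fval n E p x = (\<Sum>k=1..n. E k * p k / (1 + real (x k)))"

definition fworst :: "nat \<Rightarrow> (nat \<Rightarrow> real) \<Rightarrow> (nat \<Rightarrow> real) \<Rightarrow> real" where
  "fworst n E p = Min (fval n E p ` J2 n)"

definition Uval :: "(nat \<Rightarrow> real) \<Rightarrow> nat \<Rightarrow> real" where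
  "Uval E i = real i / (3 / E 1 + (\<Sum>k=2..i. 1 / E k))"

definition Vval :: "(nat \<Rightarrow> real) \<Rightarrow> nat \<Rightarrow> real" where
  "Vval E i = (real i - 1) / (\<Sum>k=1..i. 1 / E k)"

definition uidx :: "nat \<Rightarrow> (nat \<Rightarrow> real) \<Rightarrow> nat" where
  "uidx n E = (LEAST i. i \<in> {1..n} \<and> (\<forall>j\<in>{1..n}. Uval E j \<le> Uval E i))"

definition vidx :: "nat \<Rightarrow> (nat \<Rightarrow> real) \<Rightarrow> nat" where
  "vidx n E = (LEAST i. i \<in> {2..n} \<and> (\<forall>j\<in>{2..n}. Vval E j \<le> Vval E i))"

end

theory Submission
  imports Defs "HOL-Library.FuncSet"
begin

lemma finite_argmax:
  fixes f :: "nat \<Rightarrow> real"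
  assumes "finite A" "A \<noteq> {}"
  shows "\<exists>i\<in>A. \<forall>k\<in>A. f k \<le> f i"
proof -
  have "Max (f ` A) \<in> f ` A" using assms by simp
  then obtain i where "i \<in> A" "f i = Max (f ` A)" by auto
  moreover have "\<forall>k\<in>A. f k \<le> Max (f ` A)" using assms by simp
  ultimately show ?thesis by (intro bexI[of _ i]) auto
qed

lemma J2_finite: "finite (J2 n)"
proof -
  have inj: "inj_on (\<lambda>x. restrict x {1..n}) (J2 n)"
  proof (rule inj_onI)
    fix x y assume xy: "x \<in> J2 n" "y \<in> J2 n" "restrict x {1..n} = restrict y {1..n}"
    show "x = y"
    proof
      fix j show "x j = y j"
      proof (cases "j \<in> {1..n}")
        case True then show ?thesis using fun_cong[OF xy(3), of j] by simp
      next
        case False then show ?thesis using xy(1,2) by (auto simp: J2_def)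
      qed
    qed
  qed
  have "(\<lambda>x. restrict x {1..n}) ` J2 n \<subseteq> PiE {1..n} (\<lambda>_. {..2})"
    by (auto simp: J2_def)
  then have "finite ((\<lambda>x. restrict x {1..n}) ` J2 n)"
    by (rule finite_subset) (simp add: finite_PiE)
  then show ?thesis using finite_imageD inj by blast
qed

lemma J2_ne: "n \<ge> 1 \<Longrightarrow> J2 n \<noteq> {}"
proof -
  assume "n \<ge> 1"
  then have "(\<lambda>j. if j = 1 then 2 else 0) \<in> J2 n"
    by (auto simp: J2_def)
  then show ?thesis by blast
qed

lemma fworst_le: "x \<in> J2 n \<Longrightarrow> fworst n E p \<le> fval n E p x"
  unfolding fworst_def by (rule Min_le) (auto simp: J2_finite)

lemma fworst_ge: "n \<ge> 1 \<Longrightarrow> (\<And>x. x \<in> J2 n \<Longrightarrow> c \<le> fval n E p x) \<Longrightarrow> c \<le> fworst n E p"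
  unfolding fworst_def using J2_ne[of n] by (subst Min_ge_iff) (auto simp: J2_finite)

lemma lp:
  fixes M b e1 Es e0 :: real
  assumes "0 \<le> b" "b \<le> M" "Es \<le> 1" "2*e1 + Es \<le> 2" "e1 \<le> Es" "e0 \<le> e1"
  shows "(M-b)*e0 + b*Es \<le> max (2/3*M) ((M+b)/2)"
proof -
  have 1: "(M-b)*e0 \<le> (M-b)*e1" by (rule mult_left_mono) (use assms in auto)
  show ?thesis
  proof (cases "3*b \<ge> M")
    case True
    have eq: "(M-b)*e1 + b*Es = (M-b)/2*(2*e1+Es) + (3*b-M)/2*Es" by (simp add: field_simps)
    have A: "(M-b)/2*(2*e1+Es) \<le> (M-b)/2*2" by (rule mult_left_mono) (use assms in auto)
    have B: "(3*b-M)/2*Es \<le> (3*b-M)/2*1" by (rule mult_left_mono) (use assms True in auto)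
    have C: "(M-b)/2*2 + (3*b-M)/2*1 = (M+b)/2" by (simp add: field_simps)
    have D: "(M+b)/2 \<le> max (2/3*M) ((M+b)/2)" by simp
    show ?thesis using 1 eq A B C D by linarith
  next
    case False
    have eq: "(M-b)*e1 + b*Es = M/3*(2*e1+Es) + (M/3-b)*(e1-Es)" by (simp add: field_simps)
    have A: "M/3*(2*e1+Es) \<le> M/3*2" by (rule mult_left_mono) (use assms in auto)
    have B: "(M/3-b)*(e1-Es) \<le> 0" by (rule mult_nonneg_nonpos) (use assms False in auto)
    have D: "M/3*2 \<le> max (2/3*M) ((M+b)/2)" by simp
    show ?thesis using 1 eq A B D by linarith
  qed
qed

lemma term_eq: "(c::real) / (1 + real m) = c - c * real m / (1 + real m)"
  by (simp add: field_simps)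

lemma upper:
  fixes n :: nat and E p :: "nat \<Rightarrow> real" and W :: real
  assumes hn: "n \<ge> 2"
    and hmono: "\<And>i j. 1 \<le> i \<Longrightarrow> i \<le> j \<Longrightarrow> j \<le> n \<Longrightarrow> E j \<le> E i"
    and hpos: "E n > 0"
    and hW: "W > 0"
    and hU: "\<forall>j\<in>{1..n}. Uval E j \<le> W"
    and hV: "\<forall>j\<in>{2..n}. Vval E j \<le> W"
    and hp: "p \<in> simplexI n"
  shows "fworst n E p \<le> W"
proof -
  have Epos: "E k > 0" if "k \<in> {1..n}" for k
    using hmono[of k n] that hpos by auto
  define a where "a k = E k * p k" for k
  have p0: "0 \<le> p k" if "k \<in> {1..n}" for k using hp that by (auto simp: simplexI_def)
  have psum: "(\<Sum>k=1..n. p k) = 1" using hp by (auto simp: simplexI_def)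
  have a0: "0 \<le> a k" if "k \<in> {1..n}" for k using Epos[OF that] p0[OF that] by (simp add: a_def)
  have "\<exists>i\<in>{1..n}. \<forall>k\<in>{1..n}. a k \<le> a i" by (rule finite_argmax) (use hn in auto)
  then obtain i0 where i0: "i0 \<in> {1..n}" "\<forall>k\<in>{1..n}. a k \<le> a i0" by blast
  have ne: "{1..n} - {i0} \<noteq> {}"
  proof (cases "i0 = 1")
    case True then have "2 \<in> {1..n} - {i0}" using hn by auto
    then show ?thesis by blast
  next
    case False then have "1 \<in> {1..n} - {i0}" using hn by auto
    then show ?thesis by blast
  qed
  have "\<exists>i\<in>{1..n} - {i0}. \<forall>k\<in>{1..n} - {i0}. a k \<le> a i" by (rule finite_argmax) (use ne in auto)
  then obtain j0 where j0: "j0 \<in> {1..n} - {i0}" "\<forall>k\<in>{1..n} - {i0}. a k \<le> a j0" by blast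
  define M where "M = a i0"
  define b where "b = a j0"
  define S where "S = (\<Sum>k=1..n. a k)"
  have fv: "fval n E p x = S - (\<Sum>k=1..n. a k * real (x k) / (1 + real (x k)))" for x
  proof -
    have "fval n E p x = (\<Sum>k=1..n. a k - a k * real (x k) / (1 + real (x k)))"
      unfolding fval_def a_def by (rule sum.cong[OF refl], rule term_eq)
    then show ?thesis by (simp add: S_def sum_subtractf)
  qed
  define x1 where "x1 = (\<lambda>j::nat. if j = i0 then (2::nat) else 0)"
  have x1J: "x1 \<in> J2 n" using i0(1) by (auto simp: J2_def x1_def)
  have "(\<Sum>k=1..n. a k * real (x1 k) / (1 + real (x1 k))) = (\<Sum>k=1..n. if k = i0 then a k * 2 / 3 else 0)"
    by (rule sum.cong) (auto simp: x1_def)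
  also have "\<dots> = M * 2 / 3" using i0(1) by (simp add: M_def)
  finally have h1: "fworst n E p \<le> S - 2/3*M" using fworst_le[OF x1J, of E p] fv[of x1] by linarith
  define x2 where "x2 = (\<lambda>j::nat. if j = i0 \<or> j = j0 then (1::nat) else 0)"
  have ij: "i0 \<noteq> j0" using j0 by auto
  have x2s: "x2 j = (if j = i0 then 1 else 0) + (if j = j0 then 1 else 0)" for j
    using ij by (auto simp: x2_def)
  have x2J: "x2 \<in> J2 n" using i0(1) j0(1)
    by (auto simp: J2_def x2s sum.distrib)
  have "(\<Sum>k=1..n. a k * real (x2 k) / (1 + real (x2 k))) =
       (\<Sum>k=1..n. (if k = i0 then a k / 2 else 0) + (if k = j0 then a k / 2 else 0))"
    by (rule sum.cong) (auto simp: x2_def ij)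
  also have "\<dots> = (M + b)/2" using i0(1) j0(1) by (simp add: sum.distrib M_def b_def add_divide_distrib)
  finally have h2: "fworst n E p \<le> S - (M+b)/2" using fworst_le[OF x2J, of E p] fv[of x2] by linarith
  define d where "d k = 1 - W / E k" for k
  define e where "e k = max (d k) 0" for k
  have "(\<Sum>k=1..n. a k * d k) = (\<Sum>k=1..n. a k - W * p k)"
  proof (rule sum.cong[OF refl])
    fix k assume k: "k \<in> {1..n}"
    show "a k * d k = a k - W * p k" using Epos[OF k] by (simp add: a_def d_def field_simps)
  qed
  also have "\<dots> = S - W * (\<Sum>k=1..n. p k)" by (simp add: sum_subtractf sum_distrib_left S_def)
  also have "\<dots> = S - W" by (simp only: psum mult_1_right)
  finally have SW: "S - W = (\<Sum>k=1..n. a k * d k)" by simp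
  have "(\<Sum>k=1..n. a k * d k) \<le> (\<Sum>k=1..n. a k * e k)"
    by (rule sum_mono) (auto simp: e_def intro!: mult_left_mono a0)
  define Es where "Es = (\<Sum>k=1..n. e k)"
  have e0: "0 \<le> e k" for k by (simp add: e_def)
  have r1: "(\<Sum>k=1..n. a k * e k) = a i0 * e i0 + (\<Sum>k\<in>{1..n}-{i0}. a k * e k)"
    by (rule sum.remove) (use i0(1) in auto)
  have r2: "(\<Sum>k\<in>{1..n}-{i0}. a k * e k) \<le> (\<Sum>k\<in>{1..n}-{i0}. b * e k)"
    by (rule sum_mono) (auto simp: b_def intro!: mult_right_mono e0 j0(2)[rule_format])
  have r3: "Es = e i0 + (\<Sum>k\<in>{1..n}-{i0}. e k)" unfolding Es_def
    by (rule sum.remove) (use i0(1) in auto)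
  have key: "S - W \<le> (M-b) * e i0 + b * Es"
    using SW \<open>(\<Sum>k=1..n. a k * d k) \<le> _\<close> r1 r2 r3
    by (simp add: sum_distrib_left[symmetric] M_def algebra_simps)
  have n1: "1 \<in> {1..n}" using hn by auto
  have di: "d i0 \<le> d 1"
  proof -
    have "E i0 \<le> E 1" using hmono[of 1 i0] i0(1) by auto
    then have "W / E 1 \<le> W / E i0" using Epos[OF i0(1)] hW by (intro divide_left_mono) auto
    then show ?thesis by (simp add: d_def)
  qed
  have ei: "e i0 \<le> e 1" using di by (auto simp: e_def)
  have e1Es: "e 1 \<le> Es" unfolding Es_def
    by (rule member_le_sum) (use n1 e0 in auto)
  have bnd: "Es \<le> 1 \<and> 2 * e 1 + Es \<le> 2"
  proof (cases "{k\<in>{1..n}. d k > 0} = {}")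
    case True
    then have "e k = 0" if "k \<in> {1..n}" for k using that by (force simp: e_def)
    then have "Es = 0" "e 1 = 0" using n1 by (auto simp: Es_def)
    then show ?thesis by simp
  next
    case False
    define Q where "Q = {k\<in>{1..n}. d k > 0}"
    define q where "q = Max Q"
    have fQ: "finite Q" by (simp add: Q_def)
    have Qne: "Q \<noteq> {}" using False by (simp add: Q_def)
    have qQ: "q \<in> Q" unfolding q_def using fQ Qne by (rule Max_in)
    then have q1: "q \<in> {1..n}" "d q > 0" by (auto simp: Q_def)
    have lo: "d k > 0" if "k \<in> {1..q}" for k
    proof -
      have "E q \<le> E k" using hmono[of k q] that q1 by auto
      then have "W / E k \<le> W / E q" using Epos[of k] Epos[of q] that q1 hW by (intro divide_left_mono) auto
      then show ?thesis using q1 by (simp add: d_def)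
    qed
    have hi: "d k \<le> 0" if "k \<in> {1..n}" "k > q" for k
    proof (rule ccontr)
      assume "\<not> d k \<le> 0"
      then have "k \<in> Q" using that by (auto simp: Q_def)
      then have "k \<le> q" using fQ by (simp add: q_def)
      then show False using that by simp
    qed
    have "Es = (\<Sum>k=1..n. if k \<le> q then d k else 0)"
      unfolding Es_def
    proof (rule sum.cong[OF refl])
      fix k assume k: "k \<in> {1..n}"
      show "e k = (if k \<le> q then d k else 0)"
      proof (cases "k \<le> q")
        case True then show ?thesis using lo[of k] k by (auto simp: e_def)
      next
        case False then show ?thesis using hi[of k] k by (auto simp: e_def)
      qed
    qed
    also have "\<dots> = (\<Sum>k\<in>{k\<in>{1..n}. k \<le> q}. d k)" by (rule sum.inter_filter[symmetric]) simp
    also have "{k\<in>{1..n}. k \<le> q} = {1..q}" using q1 by auto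
    finally have EsD: "Es = (\<Sum>k=1..q. d k)" .
    have Dq: "(\<Sum>k=1..q. d k) = real q - W * (\<Sum>k=1..q. 1 / E k)"
      by (simp add: d_def sum_subtractf sum_distrib_left)
    have Hs: "(\<Sum>k=1..q. 1 / E k) = 1 / E 1 + (\<Sum>k=2..q. 1 / E k)"
      using q1 sum.atLeast_Suc_atMost[of 1 q "\<lambda>k. 1 / E k"] by (simp add: numeral_2_eq_2)
    have s2: "0 \<le> (\<Sum>k=2..q. 1 / E k)" proof (rule sum_nonneg)
      fix k assume "k \<in> {2..q}" then have "k \<in> {1..n}" using q1 by auto
      from Epos[OF this] show "0 \<le> 1 / E k" by simp
    qed
    have E1: "E 1 > 0" using Epos n1 .
    have den: "3 / E 1 + (\<Sum>k=2..q. 1 / E k) > 0" using s2 E1 by (simp add: add_pos_nonneg)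
    have "Uval E q \<le> W" using hU q1 by auto
    then have "real q \<le> W * (3 / E 1 + (\<Sum>k=2..q. 1 / E k))"
      using den by (simp add: Uval_def pos_divide_le_eq mult.commute)
    moreover have "W * (3 / E 1 + (\<Sum>k=2..q. 1 / E k)) = 3 * (W / E 1) + W * (\<Sum>k=2..q. 1 / E k)"
      by (simp add: algebra_simps)
    moreover have "W * (\<Sum>k=1..q. 1 / E k) = W / E 1 + W * (\<Sum>k=2..q. 1 / E k)"
      using Hs by (simp add: algebra_simps)
    moreover have "d 1 = 1 - W / E 1" by (simp add: d_def)
    ultimately have U2: "2 * d 1 + Es \<le> 2" using EsD Dq by linarith
    have ed: "e 1 = d 1" using lo[of 1] q1 by (auto simp: e_def)
    have "Es \<le> 1"
    proof (cases "q = 1")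
      case True then show ?thesis using EsD by (simp add: d_def) (use hW E1 in simp)
    next
      case False
      then have q2: "q \<in> {2..n}" using q1 by auto
      have "1 / E 1 > 0" using E1 by simp
      then have Hpos: "(\<Sum>k=1..q. 1 / E k) > 0" using Hs s2 by linarith
      have "Vval E q \<le> W" using hV q2 by auto
      then have "real q - 1 \<le> W * (\<Sum>k=1..q. 1 / E k)"
        using Hpos by (simp add: Vval_def pos_divide_le_eq mult.commute)
      then show ?thesis using EsD Dq by simp
    qed
    then show ?thesis using U2 ed by simp
  qed
  have b0: "0 \<le> b" using a0 j0(1) by (auto simp: b_def)
  have bM: "b \<le> M" using i0(2) j0(1) by (auto simp: b_def M_def)
  have "(M-b) * e i0 + b * Es \<le> max (2/3*M) ((M+b)/2)"
    using lp[OF b0 bM _ _ e1Es ei] bnd by simp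
  then have K: "S - W \<le> max (2/3*M) ((M+b)/2)" using key by linarith
  have "fworst n E p \<le> S - max (2/3*M) ((M+b)/2)"
    using h1 h2 by (cases "2/3*M \<le> (M+b)/2") (simp_all add: max_def)
  then show ?thesis using K by linarith
qed

lemma split1: fixes n :: nat and f :: "nat \<Rightarrow> 'a::comm_monoid_add" shows "1 \<le> n \<Longrightarrow> (\<Sum>k=1..n. f k) = f 1 + (\<Sum>k=2..n. f k)"
  using sum.atLeast_Suc_atMost[of 1 n f] by (simp add: numeral_2_eq_2)

lemma term_lb:
  fixes a c :: real and x :: nat
  assumes "0 \<le> a" "a \<le> c" "x \<le> 2"
  shows "a - c * real x / 2 \<le> a / (1 + real x)"
proof -
  have "x = 0 \<or> x = 1 \<or> x = 2" using assms(3) by auto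
  then show ?thesis using assms by auto
qed

lemma sum_if_le:
  fixes c :: "nat \<Rightarrow> real"
  assumes "v \<le> n"
  shows "(\<Sum>k=m..n. if k \<le> v then c k else 0) = (\<Sum>k=m..v. c k)"
proof -
  have "(\<Sum>k=m..n. if k \<le> v then c k else 0) = (\<Sum>k\<in>{k\<in>{m..n}. k \<le> v}. c k)"
    by (rule sum.inter_filter[symmetric]) simp
  also have "{k\<in>{m..n}. k \<le> v} = {m..v}" using assms by auto
  finally show ?thesis .
qed

lemma sumx:
  assumes "x \<in> J2 n"
  shows "(\<Sum>k=1..n. real (x k)) = 2" "\<forall>k\<in>{1..n}. x k \<le> 2"
proof -
  have "(\<Sum>k=1..n. x k) = 2" using assms by (simp add: J2_def)
  then have "real (\<Sum>k=1..n. x k) = 2" by simp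
  then show "(\<Sum>k=1..n. real (x k)) = 2" by (simp only: of_nat_sum)
  show "\<forall>k\<in>{1..n}. x k \<le> 2" using assms by (simp add: J2_def)
qed

lemma candV:
  fixes n v :: nat and E :: "nat \<Rightarrow> real"
  assumes hn: "n \<ge> 2" and Epos: "\<And>k. k \<in> {1..n} \<Longrightarrow> E k > 0" and hv: "v \<in> {2..n}"
  defines "ps \<equiv> (\<lambda>k. if k \<le> v then (1 / E k) / (\<Sum>j=1..v. 1 / E j) else 0)"
  shows "ps \<in> simplexI n \<and> Vval E v \<le> fworst n E ps"
proof -
  define H where "H = (\<Sum>j=1..v. 1 / E j)"
  have t0: "0 \<le> 1 / E k" if "k \<in> {1..v}" for k using Epos[of k] that hv by auto
  have tle: "1 / E k \<le> H" if "k \<in> {1..v}" for k unfolding H_def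
    by (rule member_le_sum) (use that t0 in auto)
  have Hpos: "H > 0" using tle[of 1] Epos[of 1] hv by (auto intro: less_le_trans[of 0 "1 / E 1"])
  define c where "c = 1 / H"
  have psH: "ps = (\<lambda>k. if k \<le> v then (1 / E k) / H else 0)" unfolding ps_def H_def by (rule refl)
  have mem: "ps \<in> simplexI n"
  proof -
    have "\<forall>k\<in>{1..n}. 0 \<le> ps k \<and> ps k \<le> 1"
    proof
      fix k assume k: "k \<in> {1..n}"
      show "0 \<le> ps k \<and> ps k \<le> 1"
      proof (cases "k \<le> v")
        case True
        then have kk: "k \<in> {1..v}" using k by auto
        have e: "ps k = (1 / E k) / H" by (simp add: psH True)
        have "0 \<le> (1 / E k) / H" using t0[OF kk] Hpos by simp
        moreover have "(1 / E k) / H \<le> 1" using divide_le_eq_1_pos[OF Hpos] tle[OF kk] by blast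
        ultimately show ?thesis using e by simp
      qed (simp add: psH)
    qed
    moreover have "(\<Sum>k=1..n. ps k) = 1"
    proof -
      have "(\<Sum>k=1..n. ps k) = (\<Sum>k=1..v. (1 / E k) / H)"
        unfolding psH using hv by (intro sum_if_le) auto
      also have "\<dots> = H / H" by (simp only: sum_divide_distrib[symmetric] H_def)
      finally show ?thesis using Hpos by simp
    qed
    ultimately show ?thesis by (simp add: simplexI_def)
  qed
  have lb: "Vval E v \<le> fval n E ps x" if x: "x \<in> J2 n" for x
  proof -
    have av: "E k * ps k = (if k \<le> v then c else 0)" if "k \<in> {1..n}" for k
      using Epos[OF that] by (simp add: psH c_def)
    have "(\<Sum>k=1..n. (if k \<le> v then c else 0) - c * real (x k) / 2) \<le> fval n E ps x"
      unfolding fval_def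
    proof (rule sum_mono)
      fix k assume k: "k \<in> {1..n}"
      show "(if k \<le> v then c else 0) - c * real (x k) / 2 \<le> E k * ps k / (1 + real (x k))"
      proof -
        have A: "0 \<le> E k * ps k" "E k * ps k \<le> c" using av[OF k] Hpos by (auto simp: c_def)
        have "E k * ps k - c * real (x k) / 2 \<le> E k * ps k / (1 + real (x k))"
          by (rule term_lb[OF A]) (use sumx(2)[OF x] k in auto)
        then show ?thesis using av[OF k] by simp
      qed
    qed
    moreover have "(\<Sum>k=1..n. (if k \<le> v then c else 0) - c * real (x k) / 2) = real v * c - c"
    proof -
      have "(\<Sum>k=1..n. (if k \<le> v then c else 0)) = (\<Sum>k=1..v. c)" using hv by (intro sum_if_le) auto
      also have "\<dots> = real v * c" by simp
      finally have 1: "(\<Sum>k=1..n. (if k \<le> v then c else 0)) = real v * c" .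
      have 2: "(\<Sum>k=1..n. c * real (x k) / 2) = c" 
        using sumx(1)[OF x] by (simp add: sum_divide_distrib[symmetric] sum_distrib_left[symmetric])
      show ?thesis by (simp only: sum_subtractf 1 2)
    qed
    moreover have "Vval E v = real v * c - c"
    proof -
      have "Vval E v = (real v - 1) / H" unfolding Vval_def H_def by (rule refl)
      then show ?thesis using Hpos by (simp add: c_def field_simps)
    qed
    ultimately show ?thesis by linarith
  qed
  show ?thesis using mem fworst_ge[of n "Vval E v" E ps] lb hn by auto
qed

lemma candU:
  fixes n u :: nat and E :: "nat \<Rightarrow> real"
  assumes hn: "n \<ge> 2" and Epos: "\<And>k. k \<in> {1..n} \<Longrightarrow> E k > 0" and hu: "u \<in> {1..n}"
  defines "ps \<equiv> (\<lambda>k. if k = 1 then (3 / E 1) / (3 / E 1 + (\<Sum>j=2..u. 1 / E j))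
                      else if k \<le> u then (1 / E k) / (3 / E 1 + (\<Sum>j=2..u. 1 / E j)) else 0)"
  shows "ps \<in> simplexI n \<and> Uval E u \<le> fworst n E ps"
proof -
  define D where "D = 3 / E 1 + (\<Sum>j=2..u. 1 / E j)"
  have psD: "ps = (\<lambda>k. if k = 1 then (3 / E 1) / D else if k \<le> u then (1 / E k) / D else 0)"
    unfolding ps_def D_def by (rule refl)
  have E1: "E 1 > 0" using Epos hn by auto
  have t0: "0 \<le> 1 / E k" if "k \<in> {2..u}" for k using Epos[of k] that hu by auto
  have s2: "0 \<le> (\<Sum>j=2..u. 1 / E j)" by (rule sum_nonneg) (use t0 in auto)
  have tle: "1 / E k \<le> (\<Sum>j=2..u. 1 / E j)" if "k \<in> {2..u}" for k
    by (rule member_le_sum) (use that t0 in auto)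
  have E13: "0 < 3 / E 1" using E1 by simp
  have Dpos: "D > 0" unfolding D_def using E13 s2 by linarith
  have p1: "3 / E 1 \<le> D" unfolding D_def using s2 by linarith
  define c where "c = 1 / D"
  have mem: "ps \<in> simplexI n"
  proof -
    have "\<forall>k\<in>{1..n}. 0 \<le> ps k \<and> ps k \<le> 1"
    proof
      fix k assume k: "k \<in> {1..n}"
      show "0 \<le> ps k \<and> ps k \<le> 1"
      proof (cases "k = 1")
        case True
        have e: "ps k = (3 / E 1) / D" by (simp add: psD True)
        have "0 \<le> (3 / E 1) / D" using E13 Dpos by simp
        moreover have "(3 / E 1) / D \<le> 1" using divide_le_eq_1_pos[OF Dpos] p1 by blast
        ultimately show ?thesis using e by simp
      next
        case False
        show ?thesis
        proof (cases "k \<le> u")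
          case True
          then have kk: "k \<in> {2..u}" using k False by auto
          have e: "ps k = (1 / E k) / D" using True False by (simp add: psD)
          have "0 \<le> (1 / E k) / D" using t0[OF kk] Dpos by simp
          moreover have "1 / E k \<le> D" unfolding D_def using tle[OF kk] E13 by linarith
          then have "(1 / E k) / D \<le> 1" using divide_le_eq_1_pos[OF Dpos] by blast
          ultimately show ?thesis using e by simp
        qed (use False in \<open>simp add: psD\<close>)
      qed
    qed
    moreover have "(\<Sum>k=1..n. ps k) = 1"
    proof -
      have "(\<Sum>k=1..n. ps k) = ps 1 + (\<Sum>k=2..n. ps k)" using hn by (intro split1) auto
      also have "(\<Sum>k=2..n. ps k) = (\<Sum>k=2..n. if k \<le> u then (1 / E k) / D else 0)"
        by (rule sum.cong) (auto simp: psD)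
      also have "\<dots> = (\<Sum>k=2..u. (1 / E k) / D)" using hu by (intro sum_if_le) auto
      also have "\<dots> = (\<Sum>k=2..u. 1 / E k) / D" by (simp only: sum_divide_distrib)
      also have "ps 1 = (3 / E 1) / D" by (simp add: psD)
      finally have X: "(\<Sum>k=1..n. ps k) = (3 / E 1) / D + (\<Sum>k=2..u. 1 / E k) / D" .
      have "(3 / E 1) / D + (\<Sum>k=2..u. 1 / E k) / D = ((3 / E 1) + (\<Sum>k=2..u. 1 / E k)) / D"
        by (rule add_divide_distrib[symmetric])
      also have "\<dots> = 1" using Dpos unfolding D_def by simp
      finally show ?thesis using X by simp
    qed
    ultimately show ?thesis by (simp add: simplexI_def)
  qed
  have lb: "Uval E u \<le> fval n E ps x" if x: "x \<in> J2 n" for x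
  proof -
    have av: "E k * ps k = (if k \<le> u then c else 0)" if "k \<in> {2..n}" for k
      using Epos[of k] that by (simp add: psD c_def)
    have a1: "E 1 * ps 1 = 3 * c" using E1 by (simp add: psD c_def)
    have x1: "x 1 \<le> 2" using sumx(2)[OF x] hn by auto
    have sx: "(\<Sum>k=2..n. real (x k)) = 2 - real (x 1)"
      using sumx(1)[OF x] split1[of n "\<lambda>k. real (x k)"] hn by simp
    have "(\<Sum>k=2..n. (if k \<le> u then c else 0) - c * real (x k) / 2) \<le> (\<Sum>k=2..n. E k * ps k / (1 + real (x k)))"
    proof (rule sum_mono)
      fix k assume k: "k \<in> {2..n}"
      have A: "0 \<le> E k * ps k" "E k * ps k \<le> c" using av[OF k] Dpos by (auto simp: c_def)
      have "E k * ps k - c * real (x k) / 2 \<le> E k * ps k / (1 + real (x k))"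
        by (rule term_lb[OF A]) (use sumx(2)[OF x] k in auto)
      then show "(if k \<le> u then c else 0) - c * real (x k) / 2 \<le> E k * ps k / (1 + real (x k))"
        using av[OF k] by simp
    qed
    moreover have "(\<Sum>k=2..n. (if k \<le> u then c else 0) - c * real (x k) / 2) = (real u - 1) * c - c * (2 - real (x 1)) / 2"
    proof -
      have "(\<Sum>k=2..n. (if k \<le> u then c else 0)) = (\<Sum>k=2..u. c)" using hu by (intro sum_if_le) auto
      also have "\<dots> = (real u - 1) * c" using hu by (simp add: of_nat_diff)
      finally have 1: "(\<Sum>k=2..n. (if k \<le> u then c else 0)) = (real u - 1) * c" .
      have 2: "(\<Sum>k=2..n. c * real (x k) / 2) = c * (2 - real (x 1)) / 2"
        using sx by (simp add: sum_divide_distrib[symmetric] sum_distrib_left[symmetric])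
      show ?thesis by (simp only: sum_subtractf 1 2)
    qed
    moreover have "fval n E ps x = E 1 * ps 1 / (1 + real (x 1)) + (\<Sum>k=2..n. E k * ps k / (1 + real (x k)))"
      unfolding fval_def using hn by (intro split1) auto
    moreover have "real u * c \<le> 3 * c / (1 + real (x 1)) + ((real u - 1) * c - c * (2 - real (x 1)) / 2)"
    proof -
      have "x 1 = 0 \<or> x 1 = 1 \<or> x 1 = 2" using x1 by auto
      then show ?thesis using Dpos by (auto simp: c_def field_simps)
    qed
    moreover have "Uval E u = real u * c"
    proof -
      have "Uval E u = real u / D" unfolding Uval_def D_def by (rule refl)
      then show ?thesis by (simp add: c_def)
    qed
    moreover have "E 1 * ps 1 / (1 + real (x 1)) = 3 * c / (1 + real (x 1))" using a1 by simp
    ultimately show ?thesis by linarith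
  qed
  show ?thesis using mem fworst_ge[of n "Uval E u" E ps] lb hn by auto
qed

theorem theorem3:
  fixes n :: nat and E :: "nat \<Rightarrow> real"
  assumes hn: "n \<ge> 2"
    and hmono: "\<And>i j. 1 \<le> i \<Longrightarrow> i \<le> j \<Longrightarrow> j \<le> n \<Longrightarrow> E j \<le> E i"
    and hpos: "E n > 0"
  shows
   "(Vval E (vidx n E) > Uval E (uidx n E) \<longrightarrow>
      (let v = vidx n E;
           ps = (\<lambda>k. if k \<le> v then (1 / E k) / (\<Sum>j=1..v. 1 / E j) else 0)
       in ps \<in> simplexI n \<and> (\<forall>p\<in>simplexI n. fworst n E p \<le> fworst n E ps)
          \<and> fworst n E ps = max (Uval E (uidx n E)) (Vval E (vidx n E))))
  \<and> (Uval E (uidx n E) \<ge> Vval E (vidx n E) \<longrightarrow>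
      (let u = uidx n E;
           D = 3 / E 1 + (\<Sum>j=2..u. 1 / E j);
           ps = (\<lambda>k. if k = 1 then (3 / E 1) / D
                      else if k \<le> u then (1 / E k) / D else 0)
       in ps \<in> simplexI n \<and> (\<forall>p\<in>simplexI n. fworst n E p \<le> fworst n E ps)
          \<and> fworst n E ps = max (Uval E (uidx n E)) (Vval E (vidx n E))))"
proof -
  have Epos: "E k > 0" if "k \<in> {1..n}" for k
    using hmono[of k n] that hpos by auto
  have exU: "\<exists>i. i \<in> {1..n} \<and> (\<forall>j\<in>{1..n}. Uval E j \<le> Uval E i)"
    using finite_argmax[of "{1..n}" "Uval E"] hn by auto
  have uP: "uidx n E \<in> {1..n} \<and> (\<forall>j\<in>{1..n}. Uval E j \<le> Uval E (uidx n E))"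
    unfolding uidx_def by (rule LeastI_ex[OF exU])
  have exV: "\<exists>i. i \<in> {2..n} \<and> (\<forall>j\<in>{2..n}. Vval E j \<le> Vval E i)"
    using finite_argmax[of "{2..n}" "Vval E"] hn by auto
  have vP: "vidx n E \<in> {2..n} \<and> (\<forall>j\<in>{2..n}. Vval E j \<le> Vval E (vidx n E))"
    unfolding vidx_def by (rule LeastI_ex[OF exV])
  define u where "u = uidx n E"
  define v where "v = vidx n E"
  define W where "W = max (Uval E u) (Vval E v)"
  have U1: "Uval E 1 > 0" using Epos[of 1] hn by (simp add: Uval_def)
  have "1 \<in> {1..n}" using hn by auto
  then have "Uval E 1 \<le> Uval E u" using uP by (simp add: u_def)
  moreover have "Uval E u \<le> W" by (simp add: W_def)
  ultimately have Wpos: "W > 0" using U1 by linarith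
  have hU: "\<forall>j\<in>{1..n}. Uval E j \<le> W"
  proof
    fix j assume "j \<in> {1..n}"
    then have "Uval E j \<le> Uval E u" using uP by (simp add: u_def)
    then show "Uval E j \<le> W" by (simp add: W_def)
  qed
  have hV: "\<forall>j\<in>{2..n}. Vval E j \<le> W"
  proof
    fix j assume "j \<in> {2..n}"
    then have "Vval E j \<le> Vval E v" using vP by (simp add: v_def)
    then show "Vval E j \<le> W" by (simp add: W_def)
  qed
  have up: "\<forall>p\<in>simplexI n. fworst n E p \<le> W"
    using upper[OF hn hmono hpos Wpos hU hV] by blast
  have cV: "(\<lambda>k. if k \<le> v then (1 / E k) / (\<Sum>j=1..v. 1 / E j) else 0) \<in> simplexI n
     \<and> Vval E v \<le> fworst n E (\<lambda>k. if k \<le> v then (1 / E k) / (\<Sum>j=1..v. 1 / E j) else 0)"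
    using candV[of n E v, OF hn Epos] vP unfolding v_def by blast
  have cU: "(\<lambda>k. if k = 1 then (3 / E 1) / (3 / E 1 + (\<Sum>j=2..u. 1 / E j))
                      else if k \<le> u then (1 / E k) / (3 / E 1 + (\<Sum>j=2..u. 1 / E j)) else 0) \<in> simplexI n
     \<and> Uval E u \<le> fworst n E (\<lambda>k. if k = 1 then (3 / E 1) / (3 / E 1 + (\<Sum>j=2..u. 1 / E j))
                      else if k \<le> u then (1 / E k) / (3 / E 1 + (\<Sum>j=2..u. 1 / E j)) else 0)"
    using candU[of n E u, OF hn Epos] uP unfolding u_def by blast
  have WV: "Uval E u < Vval E v \<Longrightarrow> W = Vval E v" by (simp add: W_def)
  have WU: "Vval E v \<le> Uval E u \<Longrightarrow> W = Uval E u" by (simp add: W_def)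
  show ?thesis
    unfolding Let_def u_def[symmetric] v_def[symmetric] W_def[symmetric]
    apply (intro conjI impI)
    subgoal using cV by blast
    subgoal premises h
    proof
      fix p assume "p \<in> simplexI n"
      then have "fworst n E p \<le> W" using up by blast
      then show "fworst n E p \<le> fworst n E (\<lambda>k. if k \<le> v then 1 / E k / (\<Sum>j = 1..v. 1 / E j) else 0)"
        using cV WV[OF h] by linarith
    qed
    subgoal premises h
    proof -
      have "fworst n E (\<lambda>k. if k \<le> v then 1 / E k / (\<Sum>j = 1..v. 1 / E j) else 0) \<le> W" using up cV by blast
      then show ?thesis using cV WV[OF h] by linarith
    qed
    subgoal using cU by blast
    subgoal premises h
    proof
      fix p assume "p \<in> simplexI n"
      then have "fworst n E p \<le> W" using up by blast
      then show "fworst n E p \<le> fworst n E (\<lambda>k. if k = 1 then 3 / E 1 / (3 / E 1 + (\<Sum>j = 2..u. 1 / E j))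
           else if k \<le> u then 1 / E k / (3 / E 1 + (\<Sum>j = 2..u. 1 / E j)) else 0)"
        using cU WU[OF h] by linarith
    qed
    subgoal premises h
    proof -
      have "fworst n E (\<lambda>k. if k = 1 then 3 / E 1 / (3 / E 1 + (\<Sum>j = 2..u. 1 / E j))
           else if k \<le> u then 1 / E k / (3 / E 1 + (\<Sum>j = 2..u. 1 / E j)) else 0) \<le> W" using up cU by blast
      then show ?thesis using cU WU[OF h] by linarith
    qed
    done
qed

end
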